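(* Let $m$ be a positive integer. For all positive integers $k,n$ with $k\ge m$, all indices $i_1,\ldots,i_m,j_1,\ldots,j_m,s_1,\ldots,s_m,t_1,\ldots,t_m\in\{1,\ldots,k\}$, and all $\iota_1,\ldots,\iota_m,\eta_1,\ldots,\eta_m\in\{1,\ldots,n\}$, $$\left|\int_{\mathcal{U}_k^n} f_{i_1j_1}(u_{\iota_1})\cdots f_{i_mj_m}(u_{\iota_m})\,\overline{f_{s_1t_1}(u_{\eta_1})}\cdots\overline{f_{s_mt_m}(u_{\eta_m})}\,d\mu_k^n(\vec u)\right| \le \frac{4^{m^2}}{k^m}.$$
   Context: $\mathcal{U}_k$ is the group of unitary $k\times k$ complex matrices, $\mu_k$ its normalized Haar measure, $\mathcal{U}_k^n$ the direct product of $n$ copies of $\mathcal{U}_k$ with product measure $\mu_k^n$, and $\vec u=(u_1,\ldots,u_n)\in\mathcal{U}_k^n$. For a $k\times k$ matrix $a$, $f_{ij}(a)$ denotes the $(i,j)$-entry of $a$. *)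

theory Defs
  imports "HOL-Analysis.Analysis"
begin

definition cadj :: "complex^'k^'k \<Rightarrow> complex^'k^'k" where
  "cadj A = (\<chi> i j. cnj (A $ j $ i))"

definition unitary_group :: "(complex^'k^'k) set" where
  "unitary_group = {U. U ** cadj U = mat 1}"

definition is_haar :: "(complex^'k^'k) measure \<Rightarrow> bool" where
  "is_haar M \<longleftrightarrow>
     sets M = sets (restrict_space borel (unitary_group :: (complex^'k^'k) set)) \<and>
     emeasure M (space M) = 1 \<and>
     (\<forall>g\<in>unitary_group. \<forall>A\<in>sets M.
        emeasure M ((\<lambda>u. g ** u) -` A \<inter> space M) = emeasure M A \<and>
        emeasure M ((\<lambda>u. u ** g) -` A \<inter> space M) = emeasure M A)"

end

theory Submission
  imports Defs "HOL-Probability.Probability"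
begin


lemma cadj_mult: "cadj (A ** B) = cadj B ** (cadj A :: complex^'k^'k)"
  by (simp add: cadj_def matrix_matrix_mult_def vec_eq_iff mult.commute)

lemma unitary_mult:
  assumes "U \<in> unitary_group" "G \<in> unitary_group"
  shows "U ** G \<in> (unitary_group :: (complex^'k^'k) set)"
proof -
  have "(U ** G) ** cadj (U ** G) = U ** (G ** cadj G) ** cadj U"
    by (simp add: cadj_mult matrix_mul_assoc)
  also have "\<dots> = mat 1" using assms by (simp add: unitary_group_def)
  finally show ?thesis by (simp add: unitary_group_def)
qed

lemma row_norm:
  assumes "U \<in> (unitary_group :: (complex^'k^'k) set)"
  shows "(\<Sum>l\<in>UNIV. cmod (U$a$l)^2) = 1"
proof -
  have "(U ** cadj U) $ a $ a = 1" using assms by (simp add: unitary_group_def mat_def)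
  hence "(\<Sum>l\<in>UNIV. U$a$l * cnj (U$a$l)) = 1"
    by (simp add: matrix_matrix_mult_def cadj_def)
  hence "complex_of_real (\<Sum>l\<in>UNIV. cmod (U$a$l)^2) = 1"
    by (simp flip: complex_norm_square)
  thus ?thesis by (metis of_real_eq_1_iff)
qed

lemma entry_le1:
  assumes "U \<in> (unitary_group :: (complex^'k^'k) set)"
  shows "cmod (U$a$b) \<le> 1"
proof -
  have "cmod (U$a$b)^2 \<le> (\<Sum>l\<in>UNIV. cmod (U$a$l)^2)"
    by (rule member_le_sum) auto
  hence "cmod (U$a$b)^2 \<le> 1" using row_norm[OF assms] by simp
  thus ?thesis by (simp add: power_le_one_iff abs_square_le_1)
qed

lemma cont_mult: "continuous_on UNIV (\<lambda>u::complex^'k^'k. u ** g)"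
  unfolding matrix_matrix_mult_def
  by (intro continuous_intros)



lemma haar_space: "is_haar \<mu> \<Longrightarrow> space \<mu> = unitary_group"
  unfolding is_haar_def using sets_eq_imp_space_eq[of \<mu> "restrict_space borel unitary_group"] by (simp add: space_restrict_space)

lemma haar_prob: "is_haar \<mu> \<Longrightarrow> prob_space \<mu>"
  unfolding is_haar_def by (intro prob_spaceI) auto

lemma haar_meas_cont:
  fixes \<phi> :: "complex^'k^'k \<Rightarrow> 'b::topological_space"
  assumes "is_haar \<mu>" "continuous_on UNIV \<phi>"
  shows "\<phi> \<in> borel_measurable \<mu>"
proof -
  have "sets \<mu> = sets (restrict_space borel (unitary_group :: (complex^'k^'k) set))"
    using assms unfolding is_haar_def by simp
  moreover have "\<phi> \<in> measurable (restrict_space borel (unitary_group :: (complex^'k^'k) set)) borel"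
    by (intro measurable_restrict_space1 borel_measurable_continuous_onI assms(2))
  ultimately show ?thesis using measurable_cong_sets by blast
qed

lemma haar_mult_meas:
  fixes \<mu> :: "(complex^'k^'k) measure"
  assumes "is_haar \<mu>" "g \<in> unitary_group"
  shows "(\<lambda>u. u ** g) \<in> measurable \<mu> \<mu>"
proof -
  have s: "sets \<mu> = sets (restrict_space borel (unitary_group :: (complex^'k^'k) set))"
    using assms unfolding is_haar_def by simp
  have "(\<lambda>u. u ** g) \<in> measurable (restrict_space borel (unitary_group :: (complex^'k^'k) set))
         (restrict_space borel (unitary_group :: (complex^'k^'k) set))"
    by (intro measurable_restrict_space3 borel_measurable_continuous_onI cont_mult)
       (use assms(2) unitary_mult in auto)
  thus ?thesis using measurable_cong_sets[OF s s] by blast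
qed

lemma haar_distr:
  fixes \<mu> :: "(complex^'k^'k) measure"
  assumes "is_haar \<mu>" "g \<in> unitary_group"
  shows "distr \<mu> \<mu> (\<lambda>u. u ** g) = \<mu>"
proof (rule measure_eqI)
  show "sets (distr \<mu> \<mu> (\<lambda>u. u ** g)) = sets \<mu>" by simp
  fix A assume "A \<in> sets (distr \<mu> \<mu> (\<lambda>u. u ** g))"
  hence A: "A \<in> sets \<mu>" by simp
  have "emeasure (distr \<mu> \<mu> (\<lambda>u. u ** g)) A = emeasure \<mu> ((\<lambda>u. u ** g) -` A \<inter> space \<mu>)"
    using A haar_mult_meas[OF assms] by (simp add: emeasure_distr)
  also have "\<dots> = emeasure \<mu> A" using assms A unfolding is_haar_def by blast
  finally show "emeasure (distr \<mu> \<mu> (\<lambda>u. u ** g)) A = emeasure \<mu> A" .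
qed

lemma haar_integral:
  fixes \<mu> :: "(complex^'k^'k) measure" and f :: "_ \<Rightarrow> real"
  assumes "is_haar \<mu>" "g \<in> unitary_group" "f \<in> borel_measurable \<mu>"
  shows "(\<integral>u. f (u ** g) \<partial>\<mu>) = (\<integral>u. f u \<partial>\<mu>)"
  using integral_distr[OF haar_mult_meas[OF assms(1,2)] assms(3)] haar_distr[OF assms(1,2)]
  by simp

lemma haar_integrable:
  fixes \<mu> :: "(complex^'k^'k) measure" and \<phi> :: "_ \<Rightarrow> real"
  assumes "is_haar \<mu>" "continuous_on UNIV \<phi>" "\<And>u. u \<in> unitary_group \<Longrightarrow> \<bar>\<phi> u\<bar> \<le> B"
  shows "integrable \<mu> \<phi>"
proof -
  interpret prob_space \<mu> using haar_prob[OF assms(1)] .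
  show ?thesis
    by (rule integrable_const_bound[where B=B])
       (use assms haar_space[OF assms(1)] haar_meas_cont in auto)
qed



definition dl :: "'k \<Rightarrow> 'k \<Rightarrow> complex" where "dl p q = (if p = q then 1 else 0)"

definition emb :: "'k \<Rightarrow> 'k \<Rightarrow> real \<Rightarrow> real \<Rightarrow> real \<Rightarrow> real \<Rightarrow> complex^'k^'k" where
  "emb b l \<alpha> \<beta> \<gamma> \<delta> = (\<chi> p q. if q = b then of_real \<alpha> * dl p b + of_real \<gamma> * dl p l
      else if q = l then of_real \<beta> * dl p b + of_real \<delta> * dl p l else dl p q)"

lemma emb_entries:
  fixes u :: "complex^'k^'k"
  assumes "b \<noteq> l"
  shows "(u ** emb b l \<alpha> \<beta> \<gamma> \<delta>)$a$b = of_real \<alpha> * u$a$b + of_real \<gamma> * u$a$l"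
    and "(u ** emb b l \<alpha> \<beta> \<gamma> \<delta>)$a$l = of_real \<beta> * u$a$b + of_real \<delta> * u$a$l"
  using assms
  by (simp_all add: matrix_matrix_mult_def emb_def dl_def ring_distribs sum.distrib
        if_distrib[of "\<lambda>x. y * x" for y] cong: if_cong)

lemma emb_unitary:
  assumes "b \<noteq> l" "\<alpha>^2 + \<beta>^2 = 1" "\<gamma>^2 + \<delta>^2 = 1" "\<alpha>*\<gamma> + \<beta>*\<delta> = 0"
  shows "emb b l \<alpha> \<beta> \<gamma> \<delta> \<in> (unitary_group :: (complex^'k^'k) set)"
proof -
  let ?g = "emb b l \<alpha> \<beta> \<gamma> \<delta> :: complex^'k^'k"
  have "(?g ** cadj ?g) $ p $ r = mat 1 $ p $ r" for p r
  proof -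
    have U: "(UNIV::'k set) = insert b (insert l (UNIV - {b, l}))" by auto
    have "(?g ** cadj ?g) $ p $ r = (\<Sum>q\<in>UNIV. ?g$p$q * cnj (?g$r$q))"
      by (simp add: matrix_matrix_mult_def cadj_def)
    also have "\<dots> = ?g$p$b * cnj (?g$r$b) + ?g$p$l * cnj (?g$r$l)
        + (\<Sum>q\<in>UNIV - {b,l}. ?g$p$q * cnj (?g$r$q))"
      using assms(1) by (subst U, simp add: add.assoc)
    also have "(\<Sum>q\<in>UNIV - {b,l}. ?g$p$q * cnj (?g$r$q)) = (\<Sum>q\<in>UNIV - {b,l}. dl p q * dl r q)"
      by (rule sum.cong) (auto simp: emb_def dl_def)
    also have "\<dots> = (if p = r \<and> p \<notin> {b,l} then 1 else 0)"
      by (auto simp: dl_def if_distrib[of "\<lambda>x. x * y" for y] cong: if_cong)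
    finally have e: "(?g ** cadj ?g) $ p $ r = ?g$p$b * cnj (?g$r$b) + ?g$p$l * cnj (?g$r$l)
        + (if p = r \<and> p \<notin> {b,l} then 1 else 0)" .
    have a2: "complex_of_real \<alpha> * complex_of_real \<alpha> + complex_of_real \<beta> * complex_of_real \<beta> = 1"
      using arg_cong[OF assms(2), of complex_of_real] by (simp add: power2_eq_square)
    have g2: "complex_of_real \<gamma> * complex_of_real \<gamma> + complex_of_real \<delta> * complex_of_real \<delta> = 1"
      using arg_cong[OF assms(3), of complex_of_real] by (simp add: power2_eq_square)
    have ag: "complex_of_real \<alpha> * complex_of_real \<gamma> + complex_of_real \<beta> * complex_of_real \<delta> = 0"
      using arg_cong[OF assms(4), of complex_of_real] by simp
    have ag': "complex_of_real \<gamma> * complex_of_real \<alpha> + complex_of_real \<delta> * complex_of_real \<beta> = 0"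
      using ag by (simp add: mult.commute)
    show ?thesis unfolding e using assms(1) a2 g2 ag ag'
      by (auto simp: emb_def dl_def mat_def)
  qed
  thus ?thesis by (simp add: unitary_group_def vec_eq_iff)
qed



lemma pointwise:
  fixes x y :: complex
  shows "cmod x ^ (2 * Suc m') \<le> 9 * (cmod x ^ (2 * m') * cmod y ^ 2)
     + (9/2) ^ Suc m' * ((cmod (x + y) ^ 2 / 2) ^ m' * (cmod (x - y) ^ 2 / 2))"
proof (cases "cmod x ^ 2 \<le> 9 * cmod y ^ 2")
  case True
  have "cmod x ^ (2 * Suc m') = cmod x ^ (2 * m') * cmod x ^ 2"
    by (simp add: power_add[symmetric])
  also have "\<dots> \<le> cmod x ^ (2 * m') * (9 * cmod y ^ 2)"
    by (intro mult_left_mono True) simp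
  finally have "cmod x ^ (2 * Suc m') \<le> 9 * (cmod x ^ (2 * m') * cmod y ^ 2)" by (simp add: algebra_simps)
  moreover have "0 \<le> (9/2) ^ Suc m' * ((cmod (x + y) ^ 2 / 2) ^ m' * (cmod (x - y) ^ 2 / 2))" by simp
  ultimately show ?thesis by linarith
next
  case False
  hence "(3 * cmod y)^2 < cmod x ^ 2" by (simp add: power_mult_distrib)
  hence "3 * cmod y < cmod x"
    using power_less_imp_less_base[of "3 * cmod y" 2 "cmod x"] by simp
  have p: "2/3 * cmod x \<le> cmod (x + y)" using \<open>3 * cmod y < cmod x\<close>
    using norm_diff_ineq[of x y] by linarith
  have q: "2/3 * cmod x \<le> cmod (x - y)" using \<open>3 * cmod y < cmod x\<close>
    using norm_triangle_ineq2[of x y] by linarith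
  have p2: "2/9 * cmod x ^ 2 \<le> cmod (x + y) ^ 2 / 2"
  proof -
    have "(2/3 * cmod x)^2 \<le> cmod (x + y)^2" using p by (intro power_mono) auto
    moreover have "(2/3 * cmod x)^2 = 4/9 * cmod x^2" by (simp add: power2_eq_square)
    ultimately show ?thesis by linarith
  qed
  have q2: "2/9 * cmod x ^ 2 \<le> cmod (x - y) ^ 2 / 2"
  proof -
    have "(2/3 * cmod x)^2 \<le> cmod (x - y)^2" using q by (intro power_mono) auto
    moreover have "(2/3 * cmod x)^2 = 4/9 * cmod x^2" by (simp add: power2_eq_square)
    ultimately show ?thesis by linarith
  qed
  have "(2/9 * cmod x ^ 2) ^ m' * (2/9 * cmod x ^ 2) \<le> (cmod (x + y) ^ 2 / 2) ^ m' * (cmod (x - y) ^ 2 / 2)"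
    by (intro mult_mono power_mono p2 q2) auto
  hence "(9/2) ^ Suc m' * ((2/9 * cmod x ^ 2) ^ m' * (2/9 * cmod x ^ 2)) \<le>
         (9/2) ^ Suc m' * ((cmod (x + y) ^ 2 / 2) ^ m' * (cmod (x - y) ^ 2 / 2))"
    by (intro mult_left_mono) auto
  moreover have "(9/2) ^ Suc m' * ((2/9 * cmod x ^ 2) ^ m' * (2/9 * cmod x ^ 2)) = cmod x ^ (2 * Suc m')"
  proof -
    have "(9/2) ^ Suc m' * ((2/9 * cmod x ^ 2) ^ m' * (2/9 * cmod x ^ 2))
        = (9/2) ^ Suc m' * (2/9 * cmod x ^ 2) ^ Suc m'"
      by (simp only: power_Suc2)
    also have "\<dots> = ((9/2) * (2/9 * cmod x ^ 2)) ^ Suc m'"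
      by (rule power_mult_distrib[symmetric])
    also have "\<dots> = (cmod x ^ 2) ^ Suc m'" by simp
    also have "\<dots> = cmod x ^ (2 * Suc m')" by (rule power_mult[symmetric])
    finally show ?thesis .
  qed
  moreover have "0 \<le> 9 * (cmod x ^ (2 * m') * cmod y ^ 2)" by simp
  ultimately show ?thesis by linarith
qed



lemma mixed_bound:
  fixes \<mu> :: "(complex^'k^'k) measure"
  assumes H: "is_haar \<mu>" and bl: "b \<noteq> l" and m: "m > 0"
  shows "(\<integral>u. cmod (u$a$b) ^ (2*m) \<partial>\<mu>) \<le> (if m = 1 then 1 else 9 + (9/2)^m)
           * (\<integral>u. cmod (u$a$b) ^ (2*(m-1)) * cmod (u$a$l) ^ 2 \<partial>\<mu>)"
proof -
  define f where "f = (\<lambda>u::complex^'k^'k. cmod (u$a$b) ^ (2*(m-1)) * cmod (u$a$l) ^ 2)"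
  have fc: "continuous_on UNIV f" unfolding f_def by (intro continuous_intros)
  have fm: "f \<in> borel_measurable \<mu>" by (rule haar_meas_cont[OF H fc])
  have sp: "space \<mu> = unitary_group" by (rule haar_space[OF H])
  have fb: "\<bar>f u\<bar> \<le> 1" if "u \<in> unitary_group" for u
    using entry_le1[OF that, of a b] entry_le1[OF that, of a l]
    unfolding f_def by (simp add: power_le_one mult_le_one)
  have fi: "integrable \<mu> f" by (rule haar_integrable[OF H fc fb])
  show ?thesis
  proof (cases "m = 1")
    case True
    define P where "P = (emb b l 0 1 1 0 :: complex^'k^'k)"
    have PU: "P \<in> unitary_group" unfolding P_def by (rule emb_unitary[OF bl]) auto
    have "\<And>u. f (u ** P) = cmod (u$a$b) ^ (2*m)"
      unfolding f_def P_def using emb_entries[OF bl] True by simp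
    hence "(\<integral>u. cmod (u$a$b) ^ (2*m) \<partial>\<mu>) = (\<integral>u. f (u ** P) \<partial>\<mu>)" by simp
    also have "\<dots> = (\<integral>u. f u \<partial>\<mu>)" by (rule haar_integral[OF H PU fm])
    finally show ?thesis using True by (simp add: f_def)
  next
    case False
    then obtain m' where mm: "m = Suc m'" using m by (cases m) auto
    define s where "s = 1 / sqrt 2"
    define R where "R = (emb b l s s s (-s) :: complex^'k^'k)"
    have s2: "s^2 = 1/2" unfolding s_def by (simp add: power_divide)
    have RU: "R \<in> unitary_group" unfolding R_def by (rule emb_unitary[OF bl]) (use s2 in auto)
    define g where "g = (\<lambda>u::complex^'k^'k. (cmod (u$a$b + u$a$l) ^ 2 / 2) ^ m' * (cmod (u$a$b - u$a$l) ^ 2 / 2))"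
    have nrm: "cmod (complex_of_real s * z) ^ 2 = cmod z ^ 2 / 2" for z
      by (simp add: norm_mult power_mult_distrib s2)
    have fR: "f (u ** R) = g u" for u
    proof -
      have "(u ** R)$a$b = complex_of_real s * (u$a$b + u$a$l)"
        unfolding R_def using emb_entries(1)[OF bl] by (simp add: ring_distribs)
      moreover have "(u ** R)$a$l = complex_of_real s * (u$a$b - u$a$l)"
        unfolding R_def using emb_entries(2)[OF bl] by (simp add: ring_distribs)
      ultimately show ?thesis unfolding f_def g_def mm
        by (simp add: nrm power_mult)
    qed
    have gc: "continuous_on UNIV g" unfolding g_def by (intro continuous_intros) auto
    have gi: "integrable \<mu> g"
    proof (rule haar_integrable[OF H gc])
      fix u :: "complex^'k^'k" assume u: "u \<in> unitary_group"
      have "\<bar>g u\<bar> = \<bar>f (u ** R)\<bar>" by (simp add: fR)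
      also have "\<dots> \<le> 1" by (rule fb[OF unitary_mult[OF u RU]])
      finally show "\<bar>g u\<bar> \<le> 1" .
    qed
    have "(\<integral>u. cmod (u$a$b) ^ (2*m) \<partial>\<mu>) \<le> (\<integral>u. 9 * f u + (9/2)^m * g u \<partial>\<mu>)"
    proof (rule integral_mono')
      show "integrable \<mu> (\<lambda>u. 9 * f u + (9/2)^m * g u)" using fi gi by simp
      fix u assume "u \<in> space \<mu>"
      show "cmod (u$a$b) ^ (2*m) \<le> 9 * f u + (9/2)^m * g u"
        unfolding f_def g_def mm using pointwise[of "u$a$b" m' "u$a$l"] by simp
      show "0 \<le> 9 * f u + (9/2)^m * g u" unfolding f_def g_def by simp
    qed
    also have "\<dots> = 9 * (\<integral>u. f u \<partial>\<mu>) + (9/2)^m * (\<integral>u. g u \<partial>\<mu>)"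
      using fi gi by simp
    also have "(\<integral>u. g u \<partial>\<mu>) = (\<integral>u. f (u ** R) \<partial>\<mu>)" by (simp add: fR)
    also have "\<dots> = (\<integral>u. f u \<partial>\<mu>)" by (rule haar_integral[OF H RU fm])
    finally show ?thesis using False by (simp add: f_def algebra_simps)
  qed
qed



lemma moment_step:
  fixes \<mu> :: "(complex^'k^'k) measure"
  assumes H: "is_haar \<mu>" and m: "m > 0"
  shows "real CARD('k) * (\<integral>u. cmod (u$a$b) ^ (2*m) \<partial>\<mu>) \<le> (if m = 1 then 1 else 9 + (9/2)^m)
           * (\<integral>u. cmod (u$a$b) ^ (2*(m-1)) \<partial>\<mu>)"
proof -
  define c :: real where "c = (if m = 1 then 1 else 9 + (9/2)^m)"
  have c1: "c \<ge> 1" unfolding c_def by auto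
  define h where "h = (\<lambda>l (u::complex^'k^'k). cmod (u$a$b) ^ (2*(m-1)) * cmod (u$a$l) ^ 2)"
  define E where "E = (\<integral>u. cmod (u$a$b) ^ (2*m) \<partial>\<mu>)"
  have sp: "space \<mu> = unitary_group" by (rule haar_space[OF H])
  have hi: "integrable \<mu> (h l)" for l
  proof (rule haar_integrable[OF H, where B=1])
    show "continuous_on UNIV (h l)" unfolding h_def by (intro continuous_intros)
    fix u :: "complex^'k^'k" assume u: "u \<in> unitary_group"
    show "\<bar>h l u\<bar> \<le> 1"
      using entry_le1[OF u, of a b] entry_le1[OF u, of a l]
      unfolding h_def by (simp add: power_le_one mult_le_one)
  qed
  have E0: "E \<ge> 0" unfolding E_def by simp
  have hb: "(\<integral>u. h b u \<partial>\<mu>) = E"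
  proof -
    have mm: "2*m = 2*(m-1) + 2" using m by simp
    have "h b u = cmod (u$a$b) ^ (2*m)" for u
      unfolding h_def by (subst mm, subst power_add) simp
    thus ?thesis unfolding E_def by simp
  qed
  have hl: "E \<le> c * (\<integral>u. h l u \<partial>\<mu>)" if "l \<noteq> b" for l
    unfolding E_def c_def h_def using mixed_bound[OF H _ m, of b l a] that by auto
  have "(\<integral>u. cmod (u$a$b) ^ (2*(m-1)) \<partial>\<mu>) = (\<integral>u. (\<Sum>l\<in>UNIV. h l u) \<partial>\<mu>)"
  proof (rule Bochner_Integration.integral_cong[OF refl])
    fix u assume "u \<in> space \<mu>"
    hence u: "u \<in> unitary_group" using sp by simp
    have "(\<Sum>l\<in>UNIV. h l u) = cmod (u$a$b) ^ (2*(m-1)) * (\<Sum>l\<in>UNIV. cmod (u$a$l) ^ 2)"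
      unfolding h_def by (simp add: sum_distrib_left)
    thus "cmod (u$a$b) ^ (2*(m-1)) = (\<Sum>l\<in>UNIV. h l u)" using row_norm[OF u] by simp
  qed
  also have "\<dots> = (\<Sum>l\<in>UNIV. (\<integral>u. h l u \<partial>\<mu>))"
    by (rule Bochner_Integration.integral_sum) (use hi in auto)
  also have "\<dots> = E + (\<Sum>l\<in>UNIV - {b}. (\<integral>u. h l u \<partial>\<mu>))"
    by (subst sum.remove[of UNIV b]) (auto simp: hb)
  finally have eq: "(\<integral>u. cmod (u$a$b) ^ (2*(m-1)) \<partial>\<mu>) = E + (\<Sum>l\<in>UNIV - {b}. (\<integral>u. h l u \<partial>\<mu>))" .
  have "(\<Sum>l\<in>UNIV - {b}. E) \<le> (\<Sum>l\<in>UNIV - {b}. c * (\<integral>u. h l u \<partial>\<mu>))"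
    by (rule sum_mono) (use hl in auto)
  hence s: "(real CARD('k) - 1) * E \<le> c * (\<Sum>l\<in>UNIV - {b}. (\<integral>u. h l u \<partial>\<mu>))"
    by (simp add: sum_distrib_left card_Diff_singleton of_nat_diff)
  have "real CARD('k) * E = E + (real CARD('k) - 1) * E" by (simp add: algebra_simps)
  also have "\<dots> \<le> c * E + c * (\<Sum>l\<in>UNIV - {b}. (\<integral>u. h l u \<partial>\<mu>))"
  proof -
    have "E \<le> c * E" using c1 E0 mult_right_mono[OF c1 E0] by simp
    thus ?thesis using s by linarith
  qed
  also have "\<dots> = c * (\<integral>u. cmod (u$a$b) ^ (2*(m-1)) \<partial>\<mu>)" unfolding eq by (simp add: distrib_left)
  finally show ?thesis unfolding E_def c_def .
qed

lemma c_bound: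
  assumes "n \<ge> 2"
  shows "9 + (9/2::real) ^ n \<le> 4 ^ (2*n - 1)"
proof -
  have a: "8 * (9/2::real) ^ n \<le> 16 ^ n" using assms
  proof (induction n rule: dec_induct)
    case base then show ?case by (simp add: power2_eq_square)
  next
    case (step n)
    have "8 * (9/2::real) ^ Suc n = (9/2) * (8 * (9/2) ^ n)" by simp
    also have "\<dots> \<le> 16 * 16 ^ n" using step.IH by (intro mult_mono) auto
    finally show ?case by simp
  qed
  have b: "(16::real) ^ 2 \<le> 16 ^ n" using assms by (intro power_increasing) auto
  have "(4::real) ^ (2*n - 1) * 4 = 4 ^ (2 * n)"
    using assms by (simp add: power_Suc2[symmetric])
  also have "\<dots> = 16 ^ n" by (simp add: power_mult)
  finally have c: "(4::real) ^ (2*n - 1) * 4 = 16 ^ n" .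
  show ?thesis using a b c by simp
qed

lemma moment_bound:
  fixes \<mu> :: "(complex^'k^'k) measure"
  assumes H: "is_haar \<mu>"
  shows "(\<integral>u. cmod (u$a$b) ^ (2*m) \<partial>\<mu>) \<le> 4 ^ (m^2) / real CARD('k) ^ m"
proof (induction m)
  case 0
  interpret prob_space \<mu> using haar_prob[OF H] .
  show ?case by (simp add: prob_space)
next
  case (Suc m)
  define c :: real where "c = (if Suc m = 1 then 1 else 9 + (9/2)^(Suc m))"
  have k: "real CARD('k) > 0" by simp
  have cb: "c \<le> 4 ^ (2*m+1)"
  proof (cases m)
    case 0 then show ?thesis by (simp add: c_def)
  next
    case (Suc m') then show ?thesis using c_bound[of "Suc m"] by (simp add: c_def)
  qed
  have c0: "c \<ge> 0" unfolding c_def by simp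
  have "real CARD('k) * (\<integral>u. cmod (u$a$b) ^ (2*Suc m) \<partial>\<mu>) \<le> c * (\<integral>u. cmod (u$a$b) ^ (2*m) \<partial>\<mu>)"
    using moment_step[OF H, of "Suc m" a b] by (simp add: c_def)
  also have "\<dots> \<le> 4 ^ (2*m+1) * (4 ^ (m^2) / real CARD('k) ^ m)"
    using Suc.IH cb c0 by (intro mult_mono) auto
  also have "\<dots> = real CARD('k) * (4 ^ (Suc m ^ 2) / real CARD('k) ^ Suc m)"
    using k by (simp add: power2_eq_square power_add power_mult field_simps)
  finally show ?case by (rule mult_le_cancel_left_pos[THEN iffD1, OF k])
qed



lemma amgm2:
  fixes y z :: "nat \<Rightarrow> real"
  assumes m: "m > 0" and y: "\<And>l. y l \<ge> 0" and z: "\<And>l. z l \<ge> 0"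
  shows "(\<Prod>l<m. y l) * (\<Prod>l<m. z l) \<le> (\<Sum>l<m. y l ^ (2*m) + z l ^ (2*m)) / (2*m)"
proof -
  define S where "S = {..<m} <+> {..<m}"
  define w where "w = case_sum y z"
  have fS: "finite S" "S \<noteq> {}" using m by (auto simp: S_def)
  have cS: "card S = 2*m" by (simp add: S_def card_Plus)
  have w0: "\<And>i. w i \<ge> 0" unfolding w_def using y z by (auto split: sum.split)
  have P: "(\<Prod>i\<in>S. w i) = (\<Prod>l<m. y l) * (\<Prod>l<m. z l)"
    by (simp add: S_def w_def prod.Plus comp_def)
  have Sm: "(\<Sum>i\<in>S. w i ^ (2*m)) = (\<Sum>l<m. y l ^ (2*m) + z l ^ (2*m))"
    by (simp add: S_def w_def sum.Plus comp_def sum.distrib)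
  have "(\<Prod>i\<in>S. w i ^ (2*m)) powr (1 / card S) \<le> (\<Sum>i\<in>S. w i ^ (2*m) / card S)"
    by (rule arith_geom_mean[OF fS]) (simp add: w0)
  moreover have "(\<Prod>i\<in>S. w i ^ (2*m)) powr (1 / card S) = (\<Prod>i\<in>S. w i)"
  proof -
    define Q where "Q = (\<Prod>i\<in>S. w i)"
    have Q0: "Q \<ge> 0" unfolding Q_def by (simp add: prod_nonneg w0)
    have "(\<Prod>i\<in>S. w i ^ (2*m)) = Q ^ (2*m)" unfolding Q_def by (simp add: prod_power_distrib)
    also have "\<dots> = Q powr (real (2*m))" using Q0 m by (subst powr_realpow') auto
    finally have "(\<Prod>i\<in>S. w i ^ (2*m)) powr (1 / card S) = (Q powr (real (2*m))) powr (1 / real (2*m))"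
      by (simp add: cS)
    also have "\<dots> = Q" using m Q0 by (simp add: powr_powr)
    finally show ?thesis unfolding Q_def .
  qed
  moreover have "(\<Sum>i\<in>S. w i ^ (2*m) / card S) = (\<Sum>i\<in>S. w i ^ (2*m)) / (2*m)"
    by (simp add: cS sum_divide_distrib)
  ultimately show ?thesis using P Sm by simp
qed

lemma comp_integral:
  fixes \<mu> :: "(complex^'k^'k) measure" and \<phi> :: "_ \<Rightarrow> real"
  assumes H: "is_haar \<mu>" and p: "p < n" and pm: "\<phi> \<in> borel_measurable \<mu>" and pi: "integrable \<mu> \<phi>"
  shows "integrable (PiM {..<n} (\<lambda>_. \<mu>)) (\<lambda>u. \<phi> (u p))"
    and "(\<integral>u. \<phi> (u p) \<partial>PiM {..<n} (\<lambda>_. \<mu>)) = (\<integral>u. \<phi> u \<partial>\<mu>)"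
proof -
  have PS: "\<And>i. i \<in> {..<n} \<Longrightarrow> prob_space \<mu>" using haar_prob[OF H] by simp
  have D: "distr (PiM {..<n} (\<lambda>_. \<mu>)) \<mu> (\<lambda>u. u p) = \<mu>"
    using distr_PiM_component[of "{..<n}" "\<lambda>_. \<mu>" p] PS p by simp
  have M: "(\<lambda>u. u p) \<in> measurable (PiM {..<n} (\<lambda>_. \<mu>)) \<mu>"
    using measurable_component_singleton[of p "{..<n}" "\<lambda>_. \<mu>"] p by simp
  show "integrable (PiM {..<n} (\<lambda>_. \<mu>)) (\<lambda>u. \<phi> (u p))"
    using integrable_distr_eq[OF M pm] D pi by simp
  show "(\<integral>u. \<phi> (u p) \<partial>PiM {..<n} (\<lambda>_. \<mu>)) = (\<integral>u. \<phi> u \<partial>\<mu>)"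
    using integral_distr[OF M pm] D by simp
qed



theorem lemma5:
  fixes \<mu> :: "(complex^'k^'k) measure"
    and m n :: nat
    and i j s t :: "nat \<Rightarrow> 'k"
    and \<iota> \<eta> :: "nat \<Rightarrow> nat"
  assumes "m > 0" and "n > 0" and "CARD('k) \<ge> m"
    and "is_haar \<mu>"
    and "\<forall>l<m. \<iota> l < n" and "\<forall>l<m. \<eta> l < n"
  shows "cmod (integral\<^sup>L (PiM {..<n} (\<lambda>_. \<mu>))
            (\<lambda>u. (\<Prod>l<m. u (\<iota> l) $ i l $ j l) * (\<Prod>l<m. cnj (u (\<eta> l) $ s l $ t l))))
         \<le> 4 ^ (m^2) / real (CARD('k)) ^ m"
proof -
  note m = assms(1) and H = assms(4)
  let ?P = "PiM {..<n} (\<lambda>_. \<mu>)"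
  define B :: real where "B = 4 ^ (m^2) / real (CARD('k)) ^ m"
  define Y where "Y = (\<lambda>l (u::nat \<Rightarrow> complex^'k^'k). cmod (u (\<iota> l) $ i l $ j l) ^ (2*m))"
  define Z where "Z = (\<lambda>l (u::nat \<Rightarrow> complex^'k^'k). cmod (u (\<eta> l) $ s l $ t l) ^ (2*m))"
  define G where "G = (\<lambda>u. (\<Sum>l<m. Y l u + Z l u) / (2*m))"
  have ent: "integrable ?P (\<lambda>u. cmod (u p $ a $ b) ^ (2*m))
       \<and> (\<integral>u. cmod (u p $ a $ b) ^ (2*m) \<partial>?P) \<le> B" if p: "p < n" for p a b
  proof -
    define \<phi> where "\<phi> = (\<lambda>v::complex^'k^'k. cmod (v $ a $ b) ^ (2*m))"
    have c: "continuous_on UNIV \<phi>" unfolding \<phi>_def by (intro continuous_intros)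
    have pm: "\<phi> \<in> borel_measurable \<mu>" by (rule haar_meas_cont[OF H c])
    have pi: "integrable \<mu> \<phi>"
    proof (rule haar_integrable[OF H c, where B=1])
      fix u :: "complex^'k^'k" assume "u \<in> unitary_group"
      hence "cmod (u $ a $ b) \<le> 1" by (rule entry_le1)
      thus "\<bar>\<phi> u\<bar> \<le> 1" unfolding \<phi>_def by (simp add: power_le_one)
    qed
    show ?thesis
      using comp_integral[OF H p pm pi] moment_bound[OF H, of a b m]
      unfolding \<phi>_def B_def by simp
  qed
  have Yi: "l < m \<Longrightarrow> integrable ?P (Y l) \<and> integral\<^sup>L ?P (Y l) \<le> B" for l
    unfolding Y_def using ent assms(5) by blast
  have Zi: "l < m \<Longrightarrow> integrable ?P (Z l) \<and> integral\<^sup>L ?P (Z l) \<le> B" for l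
    unfolding Z_def using ent assms(6) by blast
  have Gi: "integrable ?P G"
    unfolding G_def using Yi Zi by (intro integrable_divide Bochner_Integration.integrable_sum integrable_add) auto
  have "cmod (integral\<^sup>L ?P
            (\<lambda>u. (\<Prod>l<m. u (\<iota> l) $ i l $ j l) * (\<Prod>l<m. cnj (u (\<eta> l) $ s l $ t l))))
      \<le> (\<integral>u. cmod ((\<Prod>l<m. u (\<iota> l) $ i l $ j l) * (\<Prod>l<m. cnj (u (\<eta> l) $ s l $ t l))) \<partial>?P)"
    by (rule integral_norm_bound)
  also have "\<dots> \<le> (\<integral>u. G u \<partial>?P)"
  proof (rule integral_mono'[OF Gi])
    fix u :: "nat \<Rightarrow> complex^'k^'k"
    have "cmod ((\<Prod>l<m. u (\<iota> l) $ i l $ j l) * (\<Prod>l<m. cnj (u (\<eta> l) $ s l $ t l)))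
        = (\<Prod>l<m. cmod (u (\<iota> l) $ i l $ j l)) * (\<Prod>l<m. cmod (u (\<eta> l) $ s l $ t l))"
      by (simp add: norm_mult prod_norm[symmetric])
    also have "\<dots> \<le> G u"
      unfolding G_def Y_def Z_def by (rule amgm2[OF m]) auto
    finally show "cmod ((\<Prod>l<m. u (\<iota> l) $ i l $ j l) * (\<Prod>l<m. cnj (u (\<eta> l) $ s l $ t l))) \<le> G u" .
    show "0 \<le> G u" unfolding G_def Y_def Z_def by (intro divide_nonneg_nonneg sum_nonneg add_nonneg_nonneg) auto
  qed
  also have "\<dots> = (\<Sum>l<m. integral\<^sup>L ?P (Y l) + integral\<^sup>L ?P (Z l)) / (2*m)"
    unfolding G_def using Yi Zi
    by (simp add: Bochner_Integration.integral_sum Bochner_Integration.integral_add)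
  also have "\<dots> \<le> (\<Sum>l<m. B + B) / (2*m)"
    using Yi Zi by (intro divide_right_mono sum_mono add_mono) auto
  also have "\<dots> = B" using m by simp
  finally show ?thesis unfolding B_def .
qed

end
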